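(* Let $\boldsymbol\tau=(a,b,c,d)\in\mathbb{R}^4$ and $\mu=(p,q,r,s)=\mathrm{GT}(\boldsymbol\tau)$, and suppose $(p,q,r)\neq(0,0,0)$. Then there exists a $\mu$-Markoff map $\phi\in\Phi_\mu$ taking only real values which satisfies the BQ-conditions; i.e. the set $(\Phi_\mu)_Q^{\mathbb{R}}$ of real-valued BQ $\mu$-Markoff maps is non-empty.
   Context: Let $\Sigma$ be a countably infinite simplicial tree, properly embedded in the plane, all of whose vertices have degree $3$. A complementary region is the closure of a connected component of the complement of $\Sigma$; $\Omega$ is the set of complementary regions, $E(\Sigma)$ the set of edges. Every edge $e$ is the intersection of exactly two regions $X,Y$, and its two endpoints lie on two further regions $Z,W$ respectively; write $e\leftrightarrow(X,Y;Z,W)$. Three regions meet at each vertex. Fix a coloring $\mathcal C:\Omega\cup E(\Sigma)\to\{1,2,3\}$ such that for every $e\leftrightarrow(X,Y;Z,W)$, $\mathcal C(e)=\mathcal C(Z)=\mathcal C(W)$ and $\mathcal C(e),\mathcal C(X),\mathcal C(Y)$ are pairwise distinct; $\Omega_i$, $E_i$ denote regions/edges of color $i$. For $\mu=(p,q,r,s)$, a $\mu$-Markoff map is $\phi:\Omega\to\mathbb{C}$ such that (i) at every vertex with regions $X\in\Omega_1,Y\in\Omega_2,Z\in\Omega_3$, $x^2+y^2+z^2+xyz=px+qy+rz+s$ where $x=\phi(X)$, etc.; (ii) for $e\in E_1$, $e\leftrightarrow(Y,Z;X,X')$: $\phi(X)+\phi(X')=p-\phi(Y)\phi(Z)$; for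 $e\in E_2$, $e\leftrightarrow(X,Z;Y,Y')$: $\phi(Y)+\phi(Y')=q-\phi(X)\phi(Z)$; for $e\in E_3$, $e\leftrightarrow(X,Y;Z,Z')$: $\phi(Z)+\phi(Z')=r-\phi(X)\phi(Y)$. $\Phi_\mu$ is the set of such maps. Arrows: given $\phi$ and an edge $e\leftrightarrow(X,Y;Z,W)$, orient $e$ towards its endpoint on $W$ if $|\phi(Z)|>|\phi(W)|$, towards its endpoint on $Z$ if $|\phi(Z)|<|\phi(W)|$, arbitrarily (fixed) if equal; a sink is a vertex at which all three edges point towards it. $\Omega_\phi(k)=\{X:|\phi(X)|\le k\}$. $\mathrm{GT}(a,b,c,d)=(ab+cd,\,ad+bc,\,ac+bd,\,4-a^2-b^2-c^2-d^2-abcd)$. $\alpha=\max\{|p|,|q|,|r|\}/2$. $\mathcal S_\mu$ is the set of all roots of $x^2-uvx+u^2+v^2-4$ where $\{u,v\}$ ranges over pairs of entries of $(a,b,c,d)$ in distinct positions. $M(\mu)=\max\{|(2p_i-xp_j)/(4-x^2)|: x\in\mathcal S_\mu\setminus\{\pm2\}, p_i,p_j\text{ distinct entries among }p,q,r\}$. $m(\mu)>0$ is a fixed constant such that for every $\phi\in\Phi_\mu$ and every sink, the three regions meeting at it have $\min|\phi|\le m(\mu)$. $L(\mu)=\max\{2+\alpha,m(\mu),M(\mu)+1\}$. $\phi$ satisfies the BQ-conditions if $\phi(X)\notin[-2,2]$ for all $X\in\Omega$ and $\Omega_\phi(L(\mu))$ is finite. *)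

theory Defs
  imports Complex_Main
begin

text \<open>Up to homeomorphism of the plane there is a unique countably infinite simplicial
tree, properly embedded in the plane, all of whose vertices have degree 3.  We use the
standard concrete model: it is the dual tree of the Farey tessellation.  Complementary
regions correspond to extended rationals p/q (reduced, q > 0, together with 1/0 = infinity);
two regions share an edge iff |p s - q r| = 1; the vertices of Sigma correspond to the
triples of pairwise adjacent regions (the three regions meeting at the vertex).\<close>

type_synonym region = "int \<times> int"

definition Omega :: "region set" where
  "Omega = {(p, q). coprime p q \<and> (q > 0 \<or> (p = 1 \<and> q = 0))}"

definition adj :: "region \<Rightarrow> region \<Rightarrow> bool" where
  "adj X Y \<longleftrightarrow> X \<in> Omega \<and> Y \<in> Omega \<and> \<bar>fst X * snd Y - snd X * fst Y\<bar> = 1"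

definition is_vertex :: "region set \<Rightarrow> bool" where
  "is_vertex v \<longleftrightarrow> (\<exists>X Y Z. v = {X, Y, Z} \<and> adj X Y \<and> adj Y Z \<and> adj X Z)"

text \<open>Edges of Sigma, identified with the set of the two regions X, Y whose intersection it is.\<close>
definition Edges :: "region set set" where
  "Edges = {{X, Y} | X Y. adj X Y}"

text \<open>e <-> (X,Y;Z,W): the edge e = X \<inter> Y has its endpoints on Z and W, i.e. its endpoints
are the vertices {X,Y,Z} and {X,Y,W}.\<close>
definition edge_rel :: "region \<Rightarrow> region \<Rightarrow> region \<Rightarrow> region \<Rightarrow> bool" where
  "edge_rel X Y Z W \<longleftrightarrow> is_vertex {X, Y, Z} \<and> is_vertex {X, Y, W} \<and> Z \<noteq> W"

definition valid_coloring :: "(region \<Rightarrow> nat) \<Rightarrow> (region set \<Rightarrow> nat) \<Rightarrow> bool" where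
  "valid_coloring col ecol \<longleftrightarrow>
     (\<forall>X\<in>Omega. col X \<in> {1, 2, 3}) \<and> (\<forall>e\<in>Edges. ecol e \<in> {1, 2, 3}) \<and>
     (\<forall>X Y Z W. edge_rel X Y Z W \<longrightarrow>
        ecol {X, Y} = col Z \<and> col Z = col W \<and>
        ecol {X, Y} \<noteq> col X \<and> ecol {X, Y} \<noteq> col Y \<and> col X \<noteq> col Y)"

definition markoff_map ::
  "complex \<times> complex \<times> complex \<times> complex \<Rightarrow> (region \<Rightarrow> nat) \<Rightarrow> (region set \<Rightarrow> nat)
     \<Rightarrow> (region \<Rightarrow> complex) \<Rightarrow> bool" where
  "markoff_map mu col ecol \<phi> \<longleftrightarrow>
     (case mu of (p, q, r, s) \<Rightarrow>
       (\<forall>X Y Z. is_vertex {X, Y, Z} \<and> col X = 1 \<and> col Y = 2 \<and> col Z = 3 \<longrightarrow>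
          (\<phi> X)\<^sup>2 + (\<phi> Y)\<^sup>2 + (\<phi> Z)\<^sup>2 + \<phi> X * \<phi> Y * \<phi> Z
            = p * \<phi> X + q * \<phi> Y + r * \<phi> Z + s) \<and>
       (\<forall>Y Z X X'. edge_rel Y Z X X' \<and> ecol {Y, Z} = 1 \<longrightarrow> \<phi> X + \<phi> X' = p - \<phi> Y * \<phi> Z) \<and>
       (\<forall>X Z Y Y'. edge_rel X Z Y Y' \<and> ecol {X, Z} = 2 \<longrightarrow> \<phi> Y + \<phi> Y' = q - \<phi> X * \<phi> Z) \<and>
       (\<forall>X Y Z Z'. edge_rel X Y Z Z' \<and> ecol {X, Y} = 3 \<longrightarrow> \<phi> Z + \<phi> Z' = r - \<phi> X * \<phi> Y))"

text \<open>A tie-breaking rule: for each edge e <-> (X,Y;Z,W), tb e is the one of Z, W towards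
whose endpoint e is oriented in case |phi Z| = |phi W| (arbitrary but fixed).\<close>
definition valid_tiebreak :: "(region set \<Rightarrow> region) \<Rightarrow> bool" where
  "valid_tiebreak tb \<longleftrightarrow> (\<forall>X Y Z W. edge_rel X Y Z W \<longrightarrow> tb {X, Y} \<in> {Z, W})"

text \<open>For e <-> (X,Y;Z,W): the edge e is oriented towards its endpoint on W.\<close>
definition arrow_towards :: "(region \<Rightarrow> complex) \<Rightarrow> (region set \<Rightarrow> region) \<Rightarrow>
    region \<Rightarrow> region \<Rightarrow> region \<Rightarrow> region \<Rightarrow> bool" where
  "arrow_towards \<phi> tb X Y Z W \<longleftrightarrow>
     norm (\<phi> Z) > norm (\<phi> W) \<or> (norm (\<phi> Z) = norm (\<phi> W) \<and> tb {X, Y} = W)"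

text \<open>A sink: a vertex at which all three edges point towards it.  The vertex v = {X,Y,Z}
is the endpoint on Z of the edge e <-> (X,Y;W,Z).\<close>
definition is_sink :: "(region \<Rightarrow> complex) \<Rightarrow> (region set \<Rightarrow> region) \<Rightarrow> region set \<Rightarrow> bool" where
  "is_sink \<phi> tb v \<longleftrightarrow> is_vertex v \<and>
     (\<forall>X Y Z W. v = {X, Y, Z} \<and> edge_rel X Y W Z \<longrightarrow> arrow_towards \<phi> tb X Y W Z)"

definition sink_constant ::
  "complex \<times> complex \<times> complex \<times> complex \<Rightarrow> (region \<Rightarrow> nat) \<Rightarrow> (region set \<Rightarrow> nat)
     \<Rightarrow> real \<Rightarrow> bool" where
  "sink_constant mu col ecol m \<longleftrightarrow> m > 0 \<and>
     (\<forall>\<phi> tb v. markoff_map mu col ecol \<phi> \<and> valid_tiebreak tb \<and> is_sink \<phi> tb v \<longrightarrow>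
        (\<exists>X\<in>v. norm (\<phi> X) \<le> m))"

definition GT :: "complex \<Rightarrow> complex \<Rightarrow> complex \<Rightarrow> complex \<Rightarrow> complex \<times> complex \<times> complex \<times> complex" where
  "GT a b c d = (a * b + c * d, a * d + b * c, a * c + b * d,
                 4 - a\<^sup>2 - b\<^sup>2 - c\<^sup>2 - d\<^sup>2 - a * b * c * d)"

definition alpha :: "complex \<times> complex \<times> complex \<times> complex \<Rightarrow> real" where
  "alpha mu = (case mu of (p, q, r, s) \<Rightarrow> max (norm p) (max (norm q) (norm r)) / 2)"

definition S_set :: "complex \<Rightarrow> complex \<Rightarrow> complex \<Rightarrow> complex \<Rightarrow> complex set" where
  "S_set a b c d = {x. \<exists>i j. i < 4 \<and> j < 4 \<and> i \<noteq> j \<and>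
      x\<^sup>2 - ([a, b, c, d] ! i) * ([a, b, c, d] ! j) * x
        + ([a, b, c, d] ! i)\<^sup>2 + ([a, b, c, d] ! j)\<^sup>2 - 4 = 0}"

text \<open>M(mu); the maximum of the empty set is taken to be 0 (all quantities are nonnegative).\<close>
definition M_const :: "complex \<Rightarrow> complex \<Rightarrow> complex \<Rightarrow> complex \<Rightarrow> real" where
  "M_const a b c d = (case GT a b c d of (p, q, r, s) \<Rightarrow>
     Max (insert 0 {norm ((2 * ([p, q, r] ! i) - x * ([p, q, r] ! j)) / (4 - x\<^sup>2)) | x i j.
        x \<in> S_set a b c d - {2, -2} \<and> i < 3 \<and> j < 3 \<and> i \<noteq> j}))"

definition L_const :: "complex \<Rightarrow> complex \<Rightarrow> complex \<Rightarrow> complex \<Rightarrow> real \<Rightarrow> real" where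
  "L_const a b c d m = max (2 + alpha (GT a b c d)) (max m (M_const a b c d + 1))"

definition BQ :: "(region \<Rightarrow> complex) \<Rightarrow> real \<Rightarrow> bool" where
  "BQ \<phi> L \<longleftrightarrow> (\<forall>X\<in>Omega. \<phi> X \<notin> complex_of_real ` {-2..2}) \<and>
                 finite {X \<in> Omega. norm (\<phi> X) \<le> L}"

end

theory Submission
  imports Defs
begin


definition dt :: "region \<Rightarrow> region \<Rightarrow> int" where
  "dt X Y = fst X * snd Y - snd X * fst Y"
definition padd :: "region \<Rightarrow> region \<Rightarrow> region" where
  "padd X Y = (fst X + fst Y, snd X + snd Y)"
definition psub :: "region \<Rightarrow> region \<Rightarrow> region" where
  "psub X Y = (fst X - fst Y, snd X - snd Y)"
definition nrm :: "region \<Rightarrow> region" where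
  "nrm V = (if snd V > 0 \<or> (snd V = 0 \<and> fst V > 0) then V else (- fst V, - snd V))"

lemma adj_sym: "adj X Y \<Longrightarrow> adj Y X"
  unfolding adj_def by (auto simp: abs_minus_commute algebra_simps)

lemma adj_Omega: "adj X Y \<Longrightarrow> X \<in> Omega \<and> Y \<in> Omega"
  unfolding adj_def by auto

lemma adj_irrefl: "\<not> adj X X"
  unfolding adj_def by (auto simp: algebra_simps)

lemma adj_dt: "adj X Y \<longleftrightarrow> X \<in> Omega \<and> Y \<in> Omega \<and> \<bar>dt X Y\<bar> = 1"
  unfolding adj_def dt_def by auto

lemma Omega_snd: "X \<in> Omega \<Longrightarrow> snd X \<ge> 0"
  unfolding Omega_def by auto

lemma Omega_inf: "X \<in> Omega \<Longrightarrow> snd X = 0 \<Longrightarrow> X = (1,0)"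
  unfolding Omega_def by (cases X) auto

lemma coprime_of_dt:
  fixes a b c d :: int
  assumes "\<bar>a * d - b * c\<bar> = 1" shows "coprime a b"
proof (rule coprimeI)
  fix k assume "k dvd a" "k dvd b"
  then have "k dvd a * d - b * c" by auto
  then have "k dvd \<bar>a * d - b * c\<bar>" by simp
  then show "is_unit k" using assms by simp
qed

lemma Omega_nrm:
  assumes "coprime (fst V) (snd V)" "V \<noteq> (0,0)"
  shows "nrm V \<in> Omega"
proof -
  obtain a b where V: "V = (a,b)" by (cases V)
  have "coprime (-a) (-b)" using assms V by simp
  moreover have "coprime a b" using assms V by simp
  moreover {assume "a = 0" "b = 0" then have False using assms V by simp}
  moreover {assume "b = 0" then have "\<bar>a\<bar> = 1" using \<open>coprime a b\<close> by simp}
  ultimately show ?thesis using V unfolding nrm_def Omega_def by auto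
qed

lemma nrm_Omega: "X \<in> Omega \<Longrightarrow> nrm X = X"
  unfolding nrm_def Omega_def by auto

lemma nrm_neg: "nrm (- fst V, - snd V) = nrm V \<or> V = (0,0)"
  unfolding nrm_def by (cases V) auto



lemma abs1_cases: "\<bar>x::int\<bar> = 1 \<Longrightarrow> x = 1 \<or> x = -1" by auto

lemma common_nb:
  assumes xy: "adj X Y" and xz: "adj X Z" and yz: "adj Y Z"
  shows "Z = nrm (padd X Y) \<or> Z = nrm (psub X Y)"
proof -
  obtain a b where X: "X = (a,b)" by (cases X)
  obtain c d where Y: "Y = (c,d)" by (cases Y)
  obtain e f where Z: "Z = (e,f)" by (cases Z)
  define D where "D = a*d - b*c"
  have D1: "D = 1 \<or> D = -1" using xy X Y unfolding adj_def D_def by auto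
  define al where "al = D * (e*d - f*c)"
  define be where "be = D * (a*f - b*e)"
  have DD: "D * D = 1" using D1 by auto
  have e: "e = al * a + be * c"
  proof -
    have "al * a + be * c = D * D * e" unfolding al_def be_def D_def by (simp add: algebra_simps)
    then show ?thesis using DD by simp
  qed
  have f: "f = al * b + be * d"
  proof -
    have "al * b + be * d = D * D * f" unfolding al_def be_def D_def by (simp add: algebra_simps)
    then show ?thesis using DD by simp
  qed
  have "\<bar>a*f - b*e\<bar> = 1" using xz X Z unfolding adj_def by auto
  then have b1: "be = 1 \<or> be = -1" unfolding be_def using D1 by auto
  have "\<bar>c*f - d*e\<bar> = 1" using yz Y Z unfolding adj_def by auto
  then have a1: "al = 1 \<or> al = -1" unfolding al_def using D1 by (auto simp: algebra_simps abs_minus_commute)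
  have ZO: "Z \<in> Omega" using xz by (simp add: adj_Omega)
  have nZ: "nrm Z = Z" using ZO by (rule nrm_Omega)
  have Znz: "Z \<noteq> (0,0)" using ZO unfolding Omega_def by auto
  from a1 b1 show ?thesis
  proof (elim disjE)
    assume "al = 1" "be = 1"
    then have "Z = padd X Y" using e f X Y Z by (simp add: padd_def)
    then show ?thesis using nZ by simp
  next
    assume "al = 1" "be = -1"
    then have "Z = psub X Y" using e f X Y Z by (simp add: psub_def)
    then show ?thesis using nZ by simp
  next
    assume "al = -1" "be = 1"
    then have "Z = (- fst (psub X Y), - snd (psub X Y))" using e f X Y Z by (simp add: psub_def)
    then have "nrm (psub X Y) = Z" using nZ nrm_neg[of "psub X Y"] Znz by (metis fst_conv minus_zero snd_conv)
    then show ?thesis by simp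
  next
    assume "al = -1" "be = -1"
    then have "Z = (- fst (padd X Y), - snd (padd X Y))" using e f X Y Z by (simp add: padd_def)
    then have "nrm (padd X Y) = Z" using nZ nrm_neg[of "padd X Y"] Znz by (metis fst_conv minus_zero snd_conv)
    then show ?thesis by simp
  qed
qed

lemma dt_padd: "dt X (padd X Y) = dt X Y" "dt Y (padd X Y) = - dt X Y"
  "dt X (psub X Y) = - dt X Y" "dt Y (psub X Y) = - dt X Y"
  unfolding dt_def padd_def psub_def by (simp_all add: algebra_simps)

lemma dt_nrm: "\<bar>dt X (nrm V)\<bar> = \<bar>dt X V\<bar>"
  unfolding dt_def nrm_def by (auto simp: algebra_simps)

lemma dt_sym: "\<bar>dt X Y\<bar> = \<bar>dt Y X\<bar>"
  unfolding dt_def by (simp add: abs_minus_commute algebra_simps)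

lemma nb_Omega:
  assumes "adj X Y" shows "nrm (padd X Y) \<in> Omega" "nrm (psub X Y) \<in> Omega"
proof -
  have a: "\<bar>dt X (padd X Y)\<bar> = 1" "\<bar>dt X (psub X Y)\<bar> = 1"
    using assms by (auto simp: adj_dt dt_padd)
  have "coprime (fst (padd X Y)) (snd (padd X Y))"
    using a(1) unfolding dt_def by (intro coprime_of_dt[of _ "- snd X" _ "- fst X"]) (auto simp: algebra_simps abs_minus_commute)
  moreover have "padd X Y \<noteq> (0,0)" using a(1) unfolding dt_def by auto
  ultimately show "nrm (padd X Y) \<in> Omega" by (rule Omega_nrm)
  have "coprime (fst (psub X Y)) (snd (psub X Y))"
    using a(2) unfolding dt_def by (intro coprime_of_dt[of _ "- snd X" _ "- fst X"]) (auto simp: algebra_simps abs_minus_commute)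
  moreover have "psub X Y \<noteq> (0,0)" using a(2) unfolding dt_def by auto
  ultimately show "nrm (psub X Y) \<in> Omega" by (rule Omega_nrm)
qed

lemma nb_adj:
  assumes "adj X Y"
  shows "adj X (nrm (padd X Y))" "adj Y (nrm (padd X Y))"
        "adj X (nrm (psub X Y))" "adj Y (nrm (psub X Y))"
  using assms nb_Omega[OF assms] adj_Omega[OF assms]
  by (auto simp: adj_dt dt_nrm dt_padd)

lemma nb_distinct:
  assumes "adj X Y" shows "nrm (padd X Y) \<noteq> nrm (psub X Y)"
proof
  assume h: "nrm (padd X Y) = nrm (psub X Y)"
  have "X \<noteq> (0,0)" "Y \<noteq> (0,0)" using adj_Omega[OF assms] unfolding Omega_def by auto
  then show False using h unfolding nrm_def padd_def psub_def
    by (cases X, cases Y) (auto split: if_splits)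
qed

lemma vertex_adj:
  assumes "is_vertex {X, Y, Z}" shows "adj X Y \<and> adj Y Z \<and> adj X Z"
proof -
  obtain A B C where e: "{X,Y,Z} = {A,B,C}" and h: "adj A B" "adj B C" "adj A C"
    using assms unfolding is_vertex_def by blast
  have d: "A \<noteq> B" "B \<noteq> C" "A \<noteq> C" using h adj_irrefl by metis+
  have s: "adj B A" "adj C B" "adj C A" using h adj_sym by auto
  have "X \<noteq> Y \<and> Y \<noteq> Z \<and> X \<noteq> Z"
  proof (rule ccontr)
    assume "\<not> ?thesis"
    then have "card {X,Y,Z} \<le> 2" by (auto simp: card_insert_if)
    moreover have "card {A,B,C} = 3" using d by auto
    ultimately show False using e by simp
  qed
  moreover have "X \<in> {A,B,C}" "Y \<in> {A,B,C}" "Z \<in> {A,B,C}" using e by blast+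
  ultimately show ?thesis using h s by auto
qed

lemma vertex_intro: "adj X Y \<Longrightarrow> adj Y Z \<Longrightarrow> adj X Z \<Longrightarrow> is_vertex {X,Y,Z}"
  unfolding is_vertex_def by blast

lemma edge_rel_iff:
  "edge_rel X Y Z W \<longleftrightarrow> adj X Y \<and> Z \<in> {nrm (padd X Y), nrm (psub X Y)} \<and>
     W \<in> {nrm (padd X Y), nrm (psub X Y)} \<and> Z \<noteq> W"
proof
  assume "edge_rel X Y Z W"
  then have v: "is_vertex {X,Y,Z}" "is_vertex {X,Y,W}" "Z \<noteq> W" unfolding edge_rel_def by auto
  from vertex_adj[OF v(1)] vertex_adj[OF v(2)] v(3) common_nb
  show "adj X Y \<and> Z \<in> {nrm (padd X Y), nrm (psub X Y)} \<and>
     W \<in> {nrm (padd X Y), nrm (psub X Y)} \<and> Z \<noteq> W" by auto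
next
  assume h: "adj X Y \<and> Z \<in> {nrm (padd X Y), nrm (psub X Y)} \<and>
     W \<in> {nrm (padd X Y), nrm (psub X Y)} \<and> Z \<noteq> W"
  then have a: "adj X Y" by blast
  have v1: "is_vertex {X, Y, nrm (padd X Y)}" using nb_adj[OF a] a by (intro vertex_intro) (auto intro: adj_sym)
  have v2: "is_vertex {X, Y, nrm (psub X Y)}" using nb_adj[OF a] a by (intro vertex_intro) (auto intro: adj_sym)
  show "edge_rel X Y Z W" unfolding edge_rel_def using h v1 v2 by auto
qed



definition goodpar :: "region \<Rightarrow> region \<Rightarrow> bool" where
  "goodpar Z X \<longleftrightarrow> 1 \<le> snd X \<and> snd X < snd Z \<and> dt X Z = -1"

definition pl :: "region \<Rightarrow> region" where
  "pl Z = (if \<exists>X. goodpar Z X then SOME X. goodpar Z X else (0,1))"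
definition pr :: "region \<Rightarrow> region" where
  "pr Z = psub Z (pl Z)"
definition gp :: "region \<Rightarrow> region" where
  "gp Z = (if snd (pl Z) > snd (pr Z) then psub (pl Z) (pr Z)
           else if snd (pr Z) > snd (pl Z) then psub (pr Z) (pl Z) else (1,0))"

lemma goodpar_ex:
  assumes "Z \<in> Omega" "snd Z \<ge> 2" shows "\<exists>X. goodpar Z X"
proof -
  obtain p q where Z: "Z = (p,q)" by (cases Z)
  have cp: "coprime p q" using assms Z unfolding Omega_def by auto
  obtain u v where uv: "u * p + v * q = 1" using bezout_int[of p q] cp by auto
  define q1 where "q1 = u mod q"
  define t where "t = u div q"
  have u: "u = q1 + q * t" unfolding q1_def t_def by simp
  have qp: "q \<ge> 2" using assms Z by simp
  have dtv: "dt (- (t*p + v), q1) Z = -1" unfolding dt_def Z using uv u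
    by (simp add: algebra_simps)
  have q10: "q1 \<ge> 0" "q1 < q" unfolding q1_def using qp by auto
  have "q1 \<noteq> 0"
  proof
    assume "q1 = 0"
    then have "q * (t * p + v) = 1" using uv u by (simp add: algebra_simps)
    then have "q dvd 1" by (metis dvd_triv_left)
    then show False using qp by simp
  qed
  then have "goodpar Z (- (t*p + v), q1)" unfolding goodpar_def using q10 dtv Z by auto
  then show ?thesis by blast
qed

lemma goodpar_uniq:
  assumes "Z \<in> Omega" "goodpar Z X" "goodpar Z X'" shows "X = X'"
proof -
  obtain p q where Z: "Z = (p,q)" by (cases Z)
  obtain a b where X: "X = (a,b)" by (cases X)
  obtain a' b' where X': "X' = (a',b')" by (cases X')
  have cp: "coprime q p" using assms Z unfolding Omega_def by (auto simp: coprime_commute)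
  have e1: "a * q - b * p = -1" "a' * q - b' * p = -1"
    using assms X X' Z unfolding goodpar_def dt_def by auto
  have e: "(b - b') * p = (a - a') * q" using e1 by (simp add: algebra_simps)
  have "q dvd (b - b') * p" using e by simp
  then have "q dvd (b - b')" using cp coprime_dvd_mult_left_iff by blast
  moreover have "\<bar>b - b'\<bar> < q" using assms X X' Z unfolding goodpar_def by auto
  ultimately have bb: "b = b'"
  proof -
    assume d: "q dvd (b - b')" and l: "\<bar>b - b'\<bar> < q"
    show "b = b'"
    proof (rule ccontr)
      assume "b \<noteq> b'"
      then have "\<bar>q\<bar> \<le> \<bar>b - b'\<bar>" using d dvd_imp_le_int by simp
      then show False using l by simp
    qed
  qed
  then have "(a - a') * q = 0" using e by simp
  moreover have "q \<noteq> 0" using assms X Z unfolding goodpar_def by auto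
  ultimately have "a = a'" by simp
  then show ?thesis using bb X X' by simp
qed

lemma pl_good: "Z \<in> Omega \<Longrightarrow> snd Z \<ge> 2 \<Longrightarrow> goodpar Z (pl Z)"
proof -
  assume a: "Z \<in> Omega" "snd Z \<ge> 2"
  then have e: "\<exists>X. goodpar Z X" by (rule goodpar_ex)
  then have "pl Z = (SOME X. goodpar Z X)" unfolding pl_def by simp
  then show ?thesis using someI_ex[OF e] by simp
qed

lemma pl_eq: "Z \<in> Omega \<Longrightarrow> goodpar Z X \<Longrightarrow> pl Z = X"
proof -
  assume a: "Z \<in> Omega" "goodpar Z X"
  then have "snd Z \<ge> 2" unfolding goodpar_def by auto
  then show ?thesis using a pl_good goodpar_uniq by blast
qed

lemma pl_bounds: assumes "snd Z \<ge> 2" shows "1 \<le> snd (pl Z) \<and> snd (pl Z) < snd Z"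
proof (cases "\<exists>X. goodpar Z X")
  case True
  then have "pl Z = (SOME X. goodpar Z X)" unfolding pl_def by simp
  then have "goodpar Z (pl Z)" using someI_ex[OF True] by simp
  then show ?thesis unfolding goodpar_def by simp
next
  case False
  then show ?thesis unfolding pl_def using assms by simp
qed

lemma pr_bounds: "snd Z \<ge> 2 \<Longrightarrow> 1 \<le> snd (pr Z) \<and> snd (pr Z) < snd Z"
  using pl_bounds[of Z] unfolding pr_def psub_def by auto

lemma gp_bounds: "snd Z \<ge> 2 \<Longrightarrow> 0 \<le> snd (gp Z) \<and> snd (gp Z) < snd Z"
  using pl_bounds[of Z] pr_bounds[of Z] unfolding gp_def psub_def by auto

function vv :: "(region \<Rightarrow> real) \<Rightarrow> real \<Rightarrow> (int \<Rightarrow> real) \<Rightarrow> region \<Rightarrow> real" where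
  "vv kap C ch Z = (if snd Z \<le> 0 then C else if snd Z = 1 then ch (fst Z) else
     vv kap C ch (pl Z) * vv kap C ch (pr Z) - vv kap C ch (gp Z) + kap Z)"
  by auto
termination
  apply (relation "measure (\<lambda>(kap,C,ch,Z). nat (snd Z))")
  apply simp
  subgoal for kap C ch Z using pl_bounds[of Z] by simp
  subgoal for kap C ch Z using pr_bounds[of Z] by simp
  subgoal for kap C ch Z using gp_bounds[of Z] by simp
  done

declare vv.simps[simp del]



lemma Omega_chain: "(n, 1) \<in> Omega"
  unfolding Omega_def by auto

lemma adj_inf: "adj (1,0) Y \<longleftrightarrow> (\<exists>n. Y = (n,1))"
  unfolding adj_def Omega_def by auto

lemma good_Omega:
  assumes "goodpar Z X" shows "X \<in> Omega" "psub Z X \<in> Omega"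
proof -
  have d: "fst X * snd Z - snd X * fst Z = -1" using assms unfolding goodpar_def dt_def by auto
  have "coprime (fst X) (snd X)"
    by (rule coprime_of_dt[of _ "snd Z" _ "fst Z"]) (use d in simp)
  then show "X \<in> Omega" using assms unfolding Omega_def goodpar_def by (cases X) auto
  have "coprime (fst Z - fst X) (snd Z - snd X)"
    by (rule coprime_of_dt[of _ "snd Z" _ "fst Z"]) (use d in \<open>simp add: algebra_simps\<close>)
  then show "psub Z X \<in> Omega" using assms unfolding Omega_def goodpar_def psub_def by auto
qed

locale fm =
  fixes kap :: "region \<Rightarrow> real" and C :: real and ch :: "int \<Rightarrow> real"
    and s M \<alpha> \<beta> :: real
  assumes kap_edge: "\<And>X Y Z W. edge_rel X Y Z W \<Longrightarrow> kap Z = kap W"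
    and kap_bd: "\<And>X. \<bar>kap X\<bar> \<le> M"
    and C2: "2 < C" and C3: "C \<le> 3"
    and rec: "\<And>n. ch (n+1) + ch (n-1) = C * ch n + kap (n+1, 1)"
    and base_en: "(ch 0)\<^sup>2 + (ch 1)\<^sup>2 + C\<^sup>2 - ch 0 * ch 1 * C
               = kap (0,1) * ch 0 + kap (1,1) * ch 1 + kap (1,0) * C + s"
    and chK: "\<And>n. ch n \<ge> M + 4"
    and chab: "\<And>n. ch n \<ge> \<alpha> * \<bar>of_int n\<bar> + \<beta>"
    and ab: "\<alpha> > 0" "\<beta> > 0"
begin

abbreviation "v \<equiv> vv kap C ch"

lemma M0: "M \<ge> 0" using kap_bd[of undefined] by simp

lemma v_low: "snd Z \<le> 0 \<Longrightarrow> v Z = C" by (simp add: vv.simps)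
lemma v_chain: "v (n,1) = ch n" by (simp add: vv.simps)
lemma v_rec: "snd Z \<ge> 2 \<Longrightarrow> v Z = v (pl Z) * v (pr Z) - v (gp Z) + kap Z"
  by (subst vv.simps) simp

lemma pairs_left:
  assumes "dt X Y = -1" "snd X \<ge> 1" "snd Y \<ge> 1" "padd X Y \<in> Omega"
  shows "v (padd X Y) = v X * v Y - v (nrm (psub X Y)) + kap (padd X Y)"
proof -
  let ?Z = "padd X Y"
  have g: "goodpar ?Z X" using assms unfolding goodpar_def padd_def dt_def by (simp add: algebra_simps)
  have plZ: "pl ?Z = X" using pl_eq[OF assms(4) g] .
  have "pr ?Z = psub ?Z X" by (simp add: pr_def plZ)
  then have prZ: "pr ?Z = Y" unfolding padd_def psub_def by simp
  have gpv: "v (gp ?Z) = v (nrm (psub X Y))"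
  proof (cases "snd X > snd Y")
    case True
    then show ?thesis unfolding gp_def plZ prZ nrm_def psub_def by simp
  next
    case False
    show ?thesis
    proof (cases "snd Y > snd X")
      case True
      then show ?thesis unfolding gp_def plZ prZ nrm_def psub_def by simp
    next
      case False2: False
      then have "snd X = snd Y" using False by simp
      then have "snd (nrm (psub X Y)) \<le> 0" unfolding nrm_def psub_def by auto
      moreover have "snd (gp ?Z) \<le> 0" using \<open>snd X = snd Y\<close> unfolding gp_def plZ prZ by simp
      ultimately show ?thesis using v_low by simp
    qed
  qed
  have "snd ?Z \<ge> 2" using assms unfolding padd_def by simp
  then show ?thesis using v_rec[of ?Z] plZ prZ gpv by simp
qed

lemma edge_eq:
  assumes "adj X Y"
  shows "v (nrm (padd X Y)) + v (nrm (psub X Y)) = v X * v Y + kap (nrm (padd X Y))"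
proof -
  have XO: "X \<in> Omega" and YO: "Y \<in> Omega" using adj_Omega[OF assms] by auto
  show ?thesis
  proof (cases "X = (1,0)")
    case True
    then obtain n where Y: "Y = (n,1)" using assms adj_inf by blast
    have "nrm (padd X Y) = (n+1,1)" "nrm (psub X Y) = (n-1,1)"
      unfolding True Y nrm_def padd_def psub_def by auto
    then show ?thesis using rec[of n] True Y v_chain v_low by simp
  next
    case XF: False
    show ?thesis
    proof (cases "Y = (1,0)")
      case True
      then obtain n where X: "X = (n,1)" using adj_sym[OF assms] adj_inf by blast
      have "nrm (padd X Y) = (n+1,1)" "nrm (psub X Y) = (n-1,1)"
        unfolding True X nrm_def padd_def psub_def by auto
      then show ?thesis using rec[of n] True X v_chain v_low by (simp add: mult.commute)
    next
      case YF: False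
      have sX: "snd X \<ge> 1" using XO XF Omega_inf Omega_snd by fastforce
      have sY: "snd Y \<ge> 1" using YO YF Omega_inf Omega_snd by fastforce
      have nZ: "nrm (padd X Y) = padd X Y" unfolding nrm_def padd_def using sX sY by simp
      have ZO: "padd X Y \<in> Omega" using nb_Omega(1)[OF assms] nZ by simp
      have d: "dt X Y = 1 \<or> dt X Y = -1" using assms unfolding adj_dt by auto
      then show ?thesis
      proof
        assume "dt X Y = -1"
        then show ?thesis using pairs_left[OF _ sX sY ZO] nZ by simp
      next
        assume "dt X Y = 1"
        then have d2: "dt Y X = -1" unfolding dt_def by (simp add: algebra_simps)
        have pa: "padd Y X = padd X Y" unfolding padd_def by (simp add: add.commute)
        have ps: "nrm (psub Y X) = nrm (psub X Y)"
        proof -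
          have "psub Y X = (- fst (psub X Y), - snd (psub X Y))" unfolding psub_def by simp
          moreover have "psub X Y \<noteq> (0,0)" using \<open>dt X Y = 1\<close> unfolding psub_def dt_def
            by (cases X, cases Y) (auto simp: algebra_simps)
          ultimately show ?thesis using nrm_neg[of "psub X Y"] by simp
        qed
        show ?thesis using pairs_left[OF d2 sY sX] ZO pa ps nZ by (simp add: mult.commute)
      qed
    qed
  qed
qed

definition en :: "region \<Rightarrow> region \<Rightarrow> region \<Rightarrow> real" where
  "en X Y Z = (v X)\<^sup>2 + (v Y)\<^sup>2 + (v Z)\<^sup>2 - v X * v Y * v Z
     - kap X * v X - kap Y * v Y - kap Z * v Z"

lemma en_sym: "en X Y Z = en Y X Z" "en X Y Z = en X Z Y"
  unfolding en_def by (simp_all add: algebra_simps)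

lemma flip:
  assumes "adj X Y"
  shows "en X Y (nrm (padd X Y)) = en X Y (nrm (psub X Y))"
proof -
  have er: "edge_rel X Y (nrm (padd X Y)) (nrm (psub X Y))"
    using assms nb_distinct[OF assms] unfolding edge_rel_iff by auto
  have k: "kap (nrm (padd X Y)) = kap (nrm (psub X Y))" using kap_edge[OF er] .
  have e: "v (nrm (padd X Y)) + v (nrm (psub X Y)) = v X * v Y + kap (nrm (padd X Y))"
    using edge_eq[OF assms] .
  define a where "a = v (nrm (padd X Y))"
  define b where "b = v (nrm (psub X Y))"
  have e2: "a + b = v X * v Y + kap (nrm (padd X Y))" using e unfolding a_def b_def .
  have "en X Y (nrm (padd X Y)) - en X Y (nrm (psub X Y))
        = (a - b) * (a + b - v X * v Y - kap (nrm (padd X Y)))"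
    unfolding en_def a_def[symmetric] b_def[symmetric] k by (simp add: algebra_simps power2_eq_square)
  then show ?thesis using e2 by simp
qed

lemma chain_en: "en (1,0) (n,1) (n+1,1) = s"
proof (induction n rule: int_induct[where k=0])
  case base
  then show ?case using base_en unfolding en_def by (simp add: v_chain v_low algebra_simps)
next
  case (step1 i)
  have a: "adj (1,0) (i+1,1)" using adj_inf by auto
  have "en (1,0) (i+1,1) (i+1+1,1) = en (1,0) (i+1,1) (i,1)"
    using flip[OF a] unfolding nrm_def padd_def psub_def by (simp add: add.commute)
  then show ?case using step1 en_sym by (metis add.commute)
next
  case (step2 i)
  have a: "adj (1,0) (i,1)" using adj_inf by auto
  have "en (1,0) (i,1) (i+1,1) = en (1,0) (i,1) (i-1,1)"
    using flip[OF a] unfolding nrm_def padd_def psub_def by (simp add: add.commute)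
  then show ?case using step2 en_sym by (metis diff_add_cancel)
qed

end


lemma snd_nrm_psub: "snd X \<ge> 0 \<Longrightarrow> snd Y \<ge> 0 \<Longrightarrow> snd (nrm (psub X Y)) = \<bar>snd X - snd Y\<bar>"
  unfolding nrm_def psub_def by auto

context fm begin

lemma inf_case:
  assumes "adj (1,0) Y" "adj (1,0) Z" "adj Y Z" shows "en (1,0) Y Z = s"
proof -
  obtain n where Y: "Y = (n,1)" using assms adj_inf by blast
  obtain m where Z: "Z = (m,1)" using assms adj_inf by blast
  have "\<bar>n - m\<bar> = 1" using assms(3) Y Z unfolding adj_def by simp
  then have "m = n + 1 \<or> n = m + 1" by auto
  then show ?thesis
  proof
    assume "m = n + 1" then show ?thesis using chain_en[of n] Y Z by simp
  next
    assume "n = m + 1" then show ?thesis using chain_en[of m] Y Z en_sym by metis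
  qed
qed

lemma reduce:
  assumes "adj X Y" "adj Y Z" "adj X Z" "snd X \<ge> 1" "snd Y \<ge> 1" "snd X \<le> snd Z" "snd Y \<le> snd Z"
    "en X Y (nrm (psub X Y)) = s"
  shows "en X Y Z = s"
proof -
  have c: "Z = nrm (padd X Y) \<or> Z = nrm (psub X Y)" using common_nb assms by blast
  have "snd (nrm (psub X Y)) < snd Z" using assms snd_nrm_psub[of X Y] by auto
  then have "Z = nrm (padd X Y)" using c by auto
  then show ?thesis using flip[OF assms(1)] assms(8) by simp
qed

lemma vertex_en: "adj X Y \<Longrightarrow> adj Y Z \<Longrightarrow> adj X Z \<Longrightarrow> en X Y Z = s"
proof (induction "nat (snd X + snd Y + snd Z)" arbitrary: X Y Z rule: less_induct)
  case less
  have O: "X \<in> Omega" "Y \<in> Omega" "Z \<in> Omega" using less.prems adj_Omega by auto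
  show ?case
  proof (cases "X = (1,0) \<or> Y = (1,0) \<or> Z = (1,0)")
    case True
    then show ?thesis
    proof (elim disjE)
      assume "X = (1,0)" then show ?thesis using inf_case less.prems by simp
    next
      assume "Y = (1,0)" then show ?thesis using inf_case[of X Z] less.prems en_sym adj_sym by metis
    next
      assume "Z = (1,0)" then show ?thesis using inf_case[of X Y] less.prems en_sym adj_sym by metis
    qed
  next
    case False
    have sX: "snd X \<ge> 1" using O False Omega_inf Omega_snd by fastforce
    have sY: "snd Y \<ge> 1" using O False Omega_inf Omega_snd by fastforce
    have sZ: "snd Z \<ge> 1" using O False Omega_inf Omega_snd by fastforce
    have IH: "\<And>A B. adj A B \<Longrightarrow> snd A \<ge> 1 \<Longrightarrow> snd B \<ge> 1 \<Longrightarrow>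
        snd A + snd B + \<bar>snd A - snd B\<bar> < snd X + snd Y + snd Z \<Longrightarrow>
        en A B (nrm (psub A B)) = s"
    proof -
      fix A B assume a: "adj A B" "snd A \<ge> 1" "snd B \<ge> 1"
        "snd A + snd B + \<bar>snd A - snd B\<bar> < snd X + snd Y + snd Z"
      have "snd (nrm (psub A B)) = \<bar>snd A - snd B\<bar>" using a snd_nrm_psub by simp
      then have "nat (snd A + snd B + snd (nrm (psub A B))) < nat (snd X + snd Y + snd Z)"
        using a by simp
      then show "en A B (nrm (psub A B)) = s"
        using less.hyps nb_adj[OF a(1)] a(1) by blast
    qed
    consider "snd X \<le> snd Z \<and> snd Y \<le> snd Z" | "snd Y \<le> snd X \<and> snd Z \<le> snd X"
      | "snd X \<le> snd Y \<and> snd Z \<le> snd Y" by linarith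
    then show ?thesis
    proof cases
      case 1
      then show ?thesis using reduce[of X Y Z] less.prems IH[of X Y] sX sY sZ by auto
    next
      case 2
      have "en Y Z X = s" using reduce[of Y Z X] less.prems IH[of Y Z] sX sY sZ 2 adj_sym by auto
      then show ?thesis using en_sym by metis
    next
      case 3
      have "en X Z Y = s" using reduce[of X Z Y] less.prems IH[of X Z] sX sY sZ 3 adj_sym by auto
      then show ?thesis using en_sym by metis
    qed
  qed
qed

end


lemma prod_ineq:
  fixes x y g k M :: real
  assumes "M \<ge> 0" "x \<ge> M + 4" "y \<ge> M + 4" "g \<le> max x y" "\<bar>k\<bar> \<le> M"
  shows "x * y - g + k \<ge> x + y"
proof -
  have k: "k \<ge> - M" using assms by simp
  have main: "x * y - max x y - M \<ge> x + y"
  proof (cases "x \<ge> y")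
    case True
    have "x * (y - 2) \<ge> y * (y - 2)" using True assms by (intro mult_right_mono) auto
    moreover have "y * (y - 2) - y - M \<ge> 0"
    proof -
      have "y * (y - 3) \<ge> (M + 4) * (M + 1)" using assms by (intro mult_mono) auto
      moreover have "(M + 4) * (M + 1) \<ge> M"
      proof -
        have "M * M \<ge> 0" by simp
        then show ?thesis using assms(1) by (simp add: algebra_simps)
      qed
      moreover have "y * (y - 2) - y - M = y * (y - 3) - M" by (simp add: algebra_simps)
      ultimately show ?thesis by linarith
    qed
    ultimately show ?thesis using True by (simp add: algebra_simps max_def)
  next
    case False
    have "y * (x - 2) \<ge> x * (x - 2)" using False assms by (intro mult_right_mono) auto
    moreover have "x * (x - 2) - x - M \<ge> 0"
    proof -
      have "x * (x - 3) \<ge> (M + 4) * (M + 1)" using assms by (intro mult_mono) auto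
      moreover have "(M + 4) * (M + 1) \<ge> M"
      proof -
        have "M * M \<ge> 0" by simp
        then show ?thesis using assms(1) by (simp add: algebra_simps)
      qed
      moreover have "x * (x - 2) - x - M = x * (x - 3) - M" by (simp add: algebra_simps)
      ultimately show ?thesis by linarith
    qed
    ultimately show ?thesis using False by (simp add: algebra_simps max_def)
  qed
  show ?thesis using main assms k by linarith
qed

context fm begin

lemma growth:
  "Z \<in> Omega \<Longrightarrow> snd Z \<ge> 1 \<Longrightarrow> v Z \<ge> M + 4 \<and> v Z \<ge> \<alpha> * \<bar>of_int (fst Z)\<bar> + \<beta> * of_int (snd Z) \<and>
     (snd Z \<ge> 2 \<longrightarrow> v Z \<ge> v (pl Z) + v (pr Z))"
proof (induction "nat (snd Z)" arbitrary: Z rule: less_induct)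
  case less
  show ?case
  proof (cases "snd Z = 1")
    case True
    then obtain n where Z: "Z = (n,1)" by (cases Z) auto
    then show ?thesis using chK[of n] chab[of n] v_chain by simp
  next
    case False
    then have q2: "snd Z \<ge> 2" using less.prems by simp
    define X where "X = pl Z"
    define Y where "Y = pr Z"
    have g: "goodpar Z X" unfolding X_def using pl_good less.prems q2 by simp
    have XO: "X \<in> Omega" and YO: "Y \<in> Omega" using good_Omega[OF g] unfolding Y_def pr_def X_def by auto
    have bX: "1 \<le> snd X" "snd X < snd Z" using g unfolding goodpar_def by auto
    have bY: "1 \<le> snd Y" "snd Y < snd Z" using pr_bounds[OF q2] unfolding Y_def by auto
    have Yeq: "Y = psub Z X" unfolding Y_def pr_def X_def by simp
    have ZXY: "fst Z = fst X + fst Y" "snd Z = snd X + snd Y" using Yeq unfolding psub_def by auto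
    have dXY: "dt X Y = -1" using g Yeq unfolding goodpar_def dt_def psub_def by (simp add: algebra_simps)
    have IHX: "v X \<ge> M + 4 \<and> v X \<ge> \<alpha> * \<bar>of_int (fst X)\<bar> + \<beta> * of_int (snd X) \<and>
       (snd X \<ge> 2 \<longrightarrow> v X \<ge> v (pl X) + v (pr X))"
      using less.hyps[of X] XO bX by simp
    have IHY: "v Y \<ge> M + 4 \<and> v Y \<ge> \<alpha> * \<bar>of_int (fst Y)\<bar> + \<beta> * of_int (snd Y) \<and>
       (snd Y \<ge> 2 \<longrightarrow> v Y \<ge> v (pl Y) + v (pr Y))"
      using less.hyps[of Y] YO bY by simp
    have gpb: "v (gp Z) \<le> max (v X) (v Y)"
    proof -
      consider "snd X > snd Y" | "snd Y > snd X" | "snd X = snd Y" by linarith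
      then show ?thesis
      proof cases
        case 1
        define W where "W = psub X Y"
        have gz: "gp Z = W" unfolding gp_def W_def using 1 X_def Y_def by simp
        have gX: "goodpar X W" unfolding goodpar_def W_def using 1 dXY bY
          by (simp add: psub_def dt_def algebra_simps)
        have "pl X = W" using pl_eq[OF XO gX] .
        moreover have "pr X = Y" unfolding pr_def \<open>pl X = W\<close> W_def psub_def by simp
        ultimately have "v X \<ge> v W + v Y" using IHX 1 bY by simp
        then have "v W \<le> v X" using IHY M0 by linarith
        then show ?thesis using gz by (simp add: le_max_iff_disj)
      next
        case 2
        define W where "W = psub Y X"
        have gz: "gp Z = W" unfolding gp_def W_def using 2 X_def Y_def by simp
        have gY: "goodpar Y X" unfolding goodpar_def using 2 dXY bX
          by (simp add: dt_def)
        have "pl Y = X" using pl_eq[OF YO gY] .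
        moreover have "pr Y = W" unfolding pr_def \<open>pl Y = X\<close> W_def by simp
        ultimately have "v Y \<ge> v X + v W" using IHY 2 bX by simp
        then have "v W \<le> v Y" using IHX M0 by linarith
        then show ?thesis using gz by (simp add: le_max_iff_disj)
      next
        case 3
        have "gp Z = (1,0)" unfolding gp_def using 3 X_def Y_def by simp
        moreover have "C \<le> v X" using C3 IHX M0 by linarith
        ultimately show ?thesis using v_low by (simp add: le_max_iff_disj)
      qed
    qed
    have vZ: "v Z = v X * v Y - v (gp Z) + kap Z" using v_rec[OF q2] X_def Y_def by simp
    have ge: "v Z \<ge> v X + v Y" using prod_ineq[OF M0 _ _ gpb kap_bd[of Z]] IHX IHY vZ by simp
    have lin: "\<alpha> * \<bar>of_int (fst Z)\<bar> + \<beta> * of_int (snd Z)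
       \<le> (\<alpha> * \<bar>of_int (fst X)\<bar> + \<beta> * of_int (snd X)) + (\<alpha> * \<bar>of_int (fst Y)\<bar> + \<beta> * of_int (snd Y))"
    proof -
      have "\<bar>real_of_int (fst Z)\<bar> \<le> \<bar>of_int (fst X)\<bar> + \<bar>of_int (fst Y)\<bar>" using ZXY by simp
      then have "\<alpha> * \<bar>real_of_int (fst Z)\<bar> \<le> \<alpha> * (\<bar>of_int (fst X)\<bar> + \<bar>of_int (fst Y)\<bar>)"
        using ab by (intro mult_left_mono) auto
      then show ?thesis using ZXY by (simp add: algebra_simps)
    qed
    show ?thesis using ge lin IHX IHY M0 X_def Y_def by simp
  qed
qed

lemma v_gt2: "Z \<in> Omega \<Longrightarrow> v Z > 2"
proof (cases "snd Z \<ge> 1")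
  case True
  assume "Z \<in> Omega" then show ?thesis using growth[of Z] True M0 by simp
next
  case False
  assume "Z \<in> Omega" then have "snd Z = 0" using False Omega_snd by fastforce
  then show ?thesis using v_low C2 by simp
qed

lemma v_finite: "finite {Z \<in> Omega. v Z \<le> L}"
proof -
  define N where "N = nat \<lceil>L / \<alpha>\<rceil> + nat \<lceil>L / \<beta>\<rceil>"
  have "{Z \<in> Omega. v Z \<le> L} \<subseteq> insert (1,0) ({- int N..int N} \<times> {0..int N})"
  proof
    fix Z assume Z: "Z \<in> {Z \<in> Omega. v Z \<le> L}"
    show "Z \<in> insert (1,0) ({- int N..int N} \<times> {0..int N})"
    proof (cases "snd Z \<ge> 1")
      case False
      then show ?thesis using Z Omega_snd Omega_inf by fastforce
    next
      case True
      then have g: "v Z \<ge> \<alpha> * \<bar>of_int (fst Z)\<bar> + \<beta> * of_int (snd Z)" using growth Z by auto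
      have p1: "\<alpha> * \<bar>of_int (fst Z)\<bar> \<ge> 0" "\<beta> * of_int (snd Z) \<ge> 0" using ab True by auto
      have "\<alpha> * \<bar>of_int (fst Z)\<bar> \<le> L" using g p1 Z by simp
      then have "\<bar>of_int (fst Z)\<bar> \<le> L / \<alpha>" using ab by (simp add: field_simps)
      then have a: "\<bar>fst Z\<bar> \<le> int N" unfolding N_def by linarith
      have "\<beta> * of_int (snd Z) \<le> L" using g p1 Z by simp
      then have "of_int (snd Z) \<le> L / \<beta>" using ab by (simp add: field_simps)
      then have b: "snd Z \<le> int N" unfolding N_def by linarith
      show ?thesis using a b True by (cases Z) auto
    qed
  qed
  then show ?thesis by (rule finite_subset) auto
qed

end


lemma col_edge:
  assumes "valid_coloring col ecol" "edge_rel X Y Z W"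
  shows "col Z = col W \<and> ecol {X,Y} = col Z \<and> col X \<noteq> col Y \<and> col Z \<noteq> col X \<and> col Z \<noteq> col Y"
  using assms unfolding valid_coloring_def by metis

lemma col_range: "valid_coloring col ecol \<Longrightarrow> X \<in> Omega \<Longrightarrow> col X \<in> {1,2,3}"
  unfolding valid_coloring_def by blast

lemma vertex_edge_rel:
  assumes "adj X Y" "adj Y Z" "adj X Z" shows "\<exists>W. edge_rel X Y Z W"
proof -
  have c: "Z = nrm (padd X Y) \<or> Z = nrm (psub X Y)" using common_nb assms adj_sym by blast
  have d: "nrm (padd X Y) \<noteq> nrm (psub X Y)" using nb_distinct[OF assms(1)] .
  from c show ?thesis
  proof
    assume "Z = nrm (padd X Y)"
    then have "edge_rel X Y Z (nrm (psub X Y))" using d assms(1) unfolding edge_rel_iff by auto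
    then show ?thesis by blast
  next
    assume "Z = nrm (psub X Y)"
    then have "edge_rel X Y Z (nrm (padd X Y))" using d assms(1) unfolding edge_rel_iff by auto
    then show ?thesis by blast
  qed
qed

lemma vertex_cols:
  assumes "valid_coloring col ecol" "adj X Y" "adj Y Z" "adj X Z"
  shows "col X \<noteq> col Y \<and> col Z \<noteq> col X \<and> col Z \<noteq> col Y"
  using vertex_edge_rel[OF assms(2-4)] col_edge[OF assms(1)] by blast

lemma chain_col:
  assumes "valid_coloring col ecol"
  shows "col (n,1) = (if even n then col (0,1) else col (1,1))"
proof -
  define f where "f n = (if even n then col (0,1) else col (1,1))" for n :: int
  have step: "col (i+2,1) = col (i,1)" for i
  proof -
    have "edge_rel (1,0) (i+1,1) (i+2,1) (i,1)"
      unfolding edge_rel_iff using adj_inf[of "(i+1,1)"] by (auto simp: nrm_def padd_def psub_def)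
    then show ?thesis using col_edge[OF assms] by metis
  qed
  have "col (n,1) = f n \<and> col (n+1,1) = f (n+1)"
  proof (induction n rule: int_induct[where k=0])
    case base then show ?case unfolding f_def by simp
  next
    case (step1 i)
    then show ?case using step[of i] unfolding f_def by (simp add: add.assoc)
  next
    case (step2 i)
    then show ?case using step[of "i - 1"] unfolding f_def by (simp add: algebra_simps)
  qed
  then show ?thesis unfolding f_def by simp
qed

lemma sg_perm:
  fixes sg :: "nat \<Rightarrow> real"
  assumes "a \<in> {1,2,3}" "b \<in> {1,2,3}" "c \<in> {1,2,3}" "a \<noteq> b" "b \<noteq> c" "a \<noteq> c"
  shows "sg a * sg b * sg c = sg 1 * sg 2 * sg 3"
  using assms by (auto simp: mult_ac)

context fm begin

lemma edge_v:
  assumes "edge_rel Y Z X X'" shows "v X + v X' = v Y * v Z + kap X"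
proof -
  have h: "adj Y Z" "X \<in> {nrm (padd Y Z), nrm (psub Y Z)}" "X' \<in> {nrm (padd Y Z), nrm (psub Y Z)}" "X \<noteq> X'"
    using assms unfolding edge_rel_iff by auto
  have er: "edge_rel Y Z (nrm (padd Y Z)) (nrm (psub Y Z))"
    using h(1) nb_distinct[OF h(1)] unfolding edge_rel_iff by auto
  have k: "kap (nrm (padd Y Z)) = kap (nrm (psub Y Z))" using kap_edge[OF er] .
  show ?thesis using edge_eq[OF h(1)] h k by auto
qed

end

lemma to_markoff:
  fixes k sg :: "nat \<Rightarrow> real"
  assumes coloring: "valid_coloring col ecol"
    and F: "fm kap C ch s M \<alpha> \<beta>"
    and kapdef: "\<And>X. kap X = sg (col X) * k (col X)"
    and sg: "\<And>c. sg c = 1 \<or> sg c = -1"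
    and prod: "sg 1 * sg 2 * sg 3 = -1"
  shows "\<exists>\<phi>. markoff_map (of_real (k 1), of_real (k 2), of_real (k 3), of_real s) col ecol \<phi> \<and>
     (\<forall>X\<in>Omega. \<phi> X \<in> \<real>) \<and> BQ \<phi> L"
proof -
  interpret fm kap C ch s M \<alpha> \<beta> by (rule F)
  define w where "w X = sg (col X) * v X" for X
  define \<phi> where "\<phi> X = complex_of_real (w X)" for X
  have sq: "sg c * sg c = 1" for c using sg[of c] by auto
  have p3: "sg (col X) * sg (col Y) * sg (col Z) = -1" if "adj X Y" "adj Y Z" "adj X Z" for X Y Z
  proof -
    have "col X \<in> {1,2,3}" "col Y \<in> {1,2,3}" "col Z \<in> {1,2,3}"
      using that adj_Omega col_range[OF coloring] by blast+
    then show ?thesis using sg_perm[of "col X" "col Y" "col Z" sg] vertex_cols[OF coloring that] prod by auto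
  qed
  have vert: "(w X)\<^sup>2 + (w Y)\<^sup>2 + (w Z)\<^sup>2 + w X * w Y * w Z
        = k (col X) * w X + k (col Y) * w Y + k (col Z) * w Z + s"
    if "adj X Y" "adj Y Z" "adj X Z" for X Y Z
  proof -
    have e: "en X Y Z = s" using vertex_en that by blast
    have "w X * w Y * w Z = (sg (col X) * sg (col Y) * sg (col Z)) * (v X * v Y * v Z)"
      unfolding w_def by (simp add: algebra_simps)
    then have "w X * w Y * w Z = - (v X * v Y * v Z)" using p3[OF that] by simp
    moreover have "(w X)\<^sup>2 = (v X)\<^sup>2" "(w Y)\<^sup>2 = (v Y)\<^sup>2" "(w Z)\<^sup>2 = (v Z)\<^sup>2"
      unfolding w_def power2_eq_square using sq by (simp_all add: algebra_simps)
    moreover have "k (col X) * w X = kap X * v X" "k (col Y) * w Y = kap Y * v Y" "k (col Z) * w Z = kap Z * v Z"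
      unfolding w_def kapdef by (simp_all add: algebra_simps)
    ultimately show ?thesis using e unfolding en_def by simp
  qed
  have edg: "w X + w X' = k (col X) - w Y * w Z" if "edge_rel Y Z X X'" for X X' Y Z
  proof -
    have c: "col X = col X' \<and> ecol {Y,Z} = col X \<and> col Y \<noteq> col Z \<and> col X \<noteq> col Y \<and> col X \<noteq> col Z"
      using col_edge[OF coloring that] .
    have a: "adj Y Z" "adj Z X" "adj Y X" using that unfolding edge_rel_def using vertex_adj by blast+
    have "sg (col Y) * sg (col Z) * sg (col X) = -1" using p3[OF a] .
    then have yz: "sg (col Y) * sg (col Z) = - sg (col X)"
      using sq[of "col X"] by (metis mult.assoc mult_minus_left mult_1_right)
    have ev: "v X + v X' = v Y * v Z + kap X" using edge_v[OF that] .
    have "w X + w X' = sg (col X) * (v X + v X')" unfolding w_def using c by (simp add: algebra_simps)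
    also have "\<dots> = sg (col X) * (v Y * v Z) + sg (col X) * sg (col X) * k (col X)"
      using ev kapdef by (simp add: algebra_simps)
    also have "\<dots> = k (col X) - w Y * w Z"
    proof -
      have "w Y * w Z = (sg (col Y) * sg (col Z)) * (v Y * v Z)" unfolding w_def by (simp add: algebra_simps)
      then have "w Y * w Z = - sg (col X) * (v Y * v Z)" using yz by simp
      then show ?thesis using sq[of "col X"] by simp
    qed
    finally show ?thesis .
  qed
  have mm: "markoff_map (of_real (k 1), of_real (k 2), of_real (k 3), of_real s) col ecol \<phi>"
    unfolding markoff_map_def
  proof (simp only: prod.case, intro conjI allI impI)
    fix X Y Z assume h: "is_vertex {X, Y, Z} \<and> col X = 1 \<and> col Y = 2 \<and> col Z = 3"
    have a: "adj X Y \<and> adj Y Z \<and> adj X Z" using vertex_adj h by blast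
    have "(w X)\<^sup>2 + (w Y)\<^sup>2 + (w Z)\<^sup>2 + w X * w Y * w Z = k 1 * w X + k 2 * w Y + k 3 * w Z + s"
      using vert a h by auto
    then have "complex_of_real ((w X)\<^sup>2 + (w Y)\<^sup>2 + (w Z)\<^sup>2 + w X * w Y * w Z)
       = complex_of_real (k 1 * w X + k 2 * w Y + k 3 * w Z + s)" by simp
    then show "(\<phi> X)\<^sup>2 + (\<phi> Y)\<^sup>2 + (\<phi> Z)\<^sup>2 + \<phi> X * \<phi> Y * \<phi> Z =
       complex_of_real (k 1) * \<phi> X + complex_of_real (k 2) * \<phi> Y + complex_of_real (k 3) * \<phi> Z + complex_of_real s"
      unfolding \<phi>_def by simp
  next
    fix Y Z X X' assume h: "edge_rel Y Z X X' \<and> ecol {Y, Z} = 1"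
    then have "col X = 1" using col_edge[OF coloring] by metis
    then have "w X + w X' = k 1 - w Y * w Z" using edg h by metis
    then show "\<phi> X + \<phi> X' = complex_of_real (k 1) - \<phi> Y * \<phi> Z" unfolding \<phi>_def
      by (metis of_real_add of_real_diff of_real_mult)
  next
    fix X Z Y Y' assume h: "edge_rel X Z Y Y' \<and> ecol {X, Z} = 2"
    then have "col Y = 2" using col_edge[OF coloring] by metis
    then have "w Y + w Y' = k 2 - w X * w Z" using edg h by metis
    then show "\<phi> Y + \<phi> Y' = complex_of_real (k 2) - \<phi> X * \<phi> Z" unfolding \<phi>_def
      by (metis of_real_add of_real_diff of_real_mult)
  next
    fix X Y Z Z' assume h: "edge_rel X Y Z Z' \<and> ecol {X, Y} = 3"
    then have "col Z = 3" using col_edge[OF coloring] by metis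
    then have "w Z + w Z' = k 3 - w X * w Y" using edg h by metis
    then show "\<phi> Z + \<phi> Z' = complex_of_real (k 3) - \<phi> X * \<phi> Y" unfolding \<phi>_def
      by (metis of_real_add of_real_diff of_real_mult)
  qed
  have nw: "\<bar>w X\<bar> = v X" if "X \<in> Omega" for X
  proof -
    have "\<bar>sg (col X)\<bar> = 1" using sg[of "col X"] by auto
    then show ?thesis unfolding w_def using v_gt2[OF that] by (simp add: abs_mult)
  qed
  have bq1: "\<forall>X\<in>Omega. \<phi> X \<notin> complex_of_real ` {-2..2}"
  proof
    fix X assume X: "X \<in> Omega"
    show "\<phi> X \<notin> complex_of_real ` {-2..2}"
    proof
      assume "\<phi> X \<in> complex_of_real ` {-2..2}"
      then obtain t where t: "t \<in> {-2..2}" "complex_of_real (w X) = complex_of_real t" unfolding \<phi>_def by auto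
      then have "w X = t" by simp
      then show False using t nw[OF X] v_gt2[OF X] by auto
    qed
  qed
  have "{X \<in> Omega. norm (\<phi> X) \<le> L} = {X \<in> Omega. v X \<le> L}"
    unfolding \<phi>_def using nw by auto
  then have "finite {X \<in> Omega. norm (\<phi> X) \<le> L}" using v_finite by simp
  then have "BQ \<phi> L" unfolding BQ_def using bq1 by simp
  moreover have "\<forall>X\<in>Omega. \<phi> X \<in> \<real>" unfolding \<phi>_def by simp
  ultimately show ?thesis using mm by blast
qed



definition kf :: "real \<Rightarrow> real \<Rightarrow> real \<Rightarrow> nat \<Rightarrow> real" where
  "kf p q r c = (if c = 1 then p else if c = 2 then q else if c = 3 then r else 0)"

lemma cosh_lower: "cosh (y::real) \<ge> (1 + \<bar>y\<bar>) / 2"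
proof -
  have c: "cosh y = (exp y + exp (- y)) / 2" by (simp add: cosh_field_def)
  have "exp \<bar>y\<bar> \<ge> 1 + \<bar>y\<bar>" by (rule exp_ge_add_one_self)
  moreover have "exp y + exp (- y) \<ge> exp \<bar>y\<bar>"
    by (cases "y \<ge> 0") (auto simp: add_increasing add_increasing2)
  ultimately have "1 + \<bar>y\<bar> \<le> exp y + exp (- y)" by linarith
  then have "(1 + \<bar>y\<bar>) / 2 \<le> (exp y + exp (- y)) / 2" by (intro divide_right_mono) auto
  then show ?thesis using c by simp
qed

lemma cosh_rec: "cosh (x + y) + cosh (x - y) = 2 * cosh x * cosh (y::real)"
  by (simp add: cosh_add cosh_diff)

lemma base_identity:
  fixes A C e0 e1 a0 a1 kR s :: real
  assumes r0: "a0 = C * e1 - 2 * e0" and r1: "a1 = C * e0 - 2 * e1"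
    and key: "A\<^sup>2 * (C\<^sup>2 - 4) = 2 * (a0 * e0 + a1 * e1) + 4 * (C\<^sup>2 - kR * C - s)"
  shows "(A + e0)\<^sup>2 + (A * C / 2 + e1)\<^sup>2 + C\<^sup>2 - (A + e0) * (A * C / 2 + e1) * C
       = - a0 * (A + e0) + - a1 * (A * C / 2 + e1) + kR * C + s"
proof -
  have "4 * (((A + e0)\<^sup>2 + (A * C / 2 + e1)\<^sup>2 + C\<^sup>2 - (A + e0) * (A * C / 2 + e1) * C)
       - (- a0 * (A + e0) + - a1 * (A * C / 2 + e1) + kR * C + s))
       = - (A\<^sup>2 * (C\<^sup>2 - 4) - (2 * (a0 * e0 + a1 * e1) + 4 * (C\<^sup>2 - kR * C - s)))"
    unfolding r0 r1 by (simp add: algebra_simps power2_eq_square)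
  then show ?thesis using key by simp
qed

lemma construct:
  fixes p q r s L :: real
  assumes coloring: "valid_coloring col ecol"
    and nz: "kf p q r (col (0,1)) \<noteq> 0 \<or> kf p q r (col (1,1)) \<noteq> 0"
  shows "\<exists>\<phi>. markoff_map (of_real p, of_real q, of_real r, of_real s) col ecol \<phi> \<and>
     (\<forall>X\<in>Omega. \<phi> X \<in> \<real>) \<and> BQ \<phi> L"
proof -
  define k where "k = kf p q r"
  define c0 where "c0 = col (0,1)"
  define c1 where "c1 = col (1,1)"
  define cR where "cR = col (1,0)"
  have a01: "adj (1,0) (0,1)" "adj (0,1) (1,1)" "adj (1,0) (1,1)"
    unfolding adj_def Omega_def by auto
  have cr: "c0 \<in> {1,2,3}" "c1 \<in> {1,2,3}" "cR \<in> {1,2,3}"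
    unfolding c0_def c1_def cR_def using col_range[OF coloring] a01 adj_Omega by blast+
  have cd: "c0 \<noteq> cR" "c1 \<noteq> c0" "c1 \<noteq> cR"
    using vertex_cols[OF coloring a01] unfolding c0_def c1_def cR_def by auto
  define s0 :: real where "s0 = (if k c0 \<ge> 0 then -1 else 1)"
  define s1 :: real where "s1 = (if k c1 \<ge> 0 then -1 else 1)"
  define sg :: "nat \<Rightarrow> real" where "sg c = (if c = c0 then s0 else if c = c1 then s1 else - s0 * s1)" for c
  have sgpm: "sg c = 1 \<or> sg c = -1" for c unfolding sg_def s0_def s1_def by auto
  have prod: "sg 1 * sg 2 * sg 3 = -1"
  proof -
    have "sg c0 * sg c1 * sg cR = sg 1 * sg 2 * sg 3" using sg_perm[of c0 c1 cR sg] cr cd by auto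
    moreover have "sg c0 * sg c1 * sg cR = -1" unfolding sg_def s0_def s1_def using cd by auto
    ultimately show ?thesis by simp
  qed
  define kap where "kap X = sg (col X) * k (col X)" for X
  define M where "M = \<bar>p\<bar> + \<bar>q\<bar> + \<bar>r\<bar>"
  define a0 where "a0 = \<bar>k c0\<bar>"
  define a1 where "a1 = \<bar>k c1\<bar>"
  have ka0: "kap (0,1) = - a0" unfolding kap_def a0_def sg_def s0_def c0_def[symmetric] by auto
  have ka1: "kap (1,1) = - a1" unfolding kap_def a1_def sg_def s1_def c1_def[symmetric] using cd by auto
  have kchain: "kap (n,1) = (if even n then - a0 else - a1)" for n
    using chain_col[OF coloring, of n] ka0 ka1 unfolding kap_def by (auto simp: c0_def c1_def)
  have kbd: "\<bar>kap X\<bar> \<le> M" for X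
  proof -
    have "\<bar>sg (col X)\<bar> = 1" using sgpm[of "col X"] by auto
    moreover have "\<bar>k (col X)\<bar> \<le> M" unfolding k_def kf_def M_def by auto
    ultimately show ?thesis unfolding kap_def by (simp add: abs_mult)
  qed
  have M0: "M \<ge> 0" unfolding M_def by simp
  define S where "S = a0 + a1"
  have a0p: "a0 \<ge> 0" and a1p: "a1 \<ge> 0" unfolding a0_def a1_def by auto
  have Sp: "S > 0" unfolding S_def a0_def a1_def using nz unfolding k_def c0_def c1_def by auto
  define T where "T = 1 + (M + 4) / S + (10 + 3 * M + \<bar>s\<bar>) / S\<^sup>2"
  have T1: "T \<ge> 1" unfolding T_def using Sp M0 by auto
  define D where "D = 1 / T"
  have Dp: "D > 0" "D \<le> 1" unfolding D_def using T1 by auto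
  have ST: "S * T \<ge> M + 4"
  proof -
    have "S * T = S + (M + 4) + (10 + 3 * M + \<bar>s\<bar>) / S" unfolding T_def using Sp
      by (simp add: field_simps power2_eq_square)
    moreover have "(10 + 3 * M + \<bar>s\<bar>) / S \<ge> 0" using Sp M0 by auto
    ultimately show ?thesis using Sp by linarith
  qed
  have S2T: "S\<^sup>2 * T \<ge> 10 + 3 * M + \<bar>s\<bar>"
  proof -
    have "S\<^sup>2 * T = S\<^sup>2 + (M + 4) * S + (10 + 3 * M + \<bar>s\<bar>)" unfolding T_def using Sp
      by (simp add: field_simps power2_eq_square)
    moreover have "S\<^sup>2 + (M + 4) * S \<ge> 0" using Sp M0 by auto
    ultimately show ?thesis by linarith
  qed
  define C where "C = sqrt (4 + D)"
  have CC: "C\<^sup>2 = 4 + D" unfolding C_def using Dp by simp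
  have C2: "C > 2" unfolding C_def using Dp real_sqrt_less_mono[of 4 "4 + D"] by simp
  have C3: "C \<le> 3" unfolding C_def using Dp real_sqrt_le_mono[of "4 + D" 9] by simp
  define e0 where "e0 = (2 * a0 + C * a1) / D"
  define e1 where "e1 = (2 * a1 + C * a0) / D"
  have r0: "a0 = C * e1 - 2 * e0"
  proof -
    have "C * e1 - 2 * e0 = (C\<^sup>2 - 4) * a0 / D" unfolding e0_def e1_def using Dp
      by (simp add: field_simps power2_eq_square)
    then show ?thesis using CC Dp by simp
  qed
  have r1: "a1 = C * e0 - 2 * e1"
  proof -
    have "C * e0 - 2 * e1 = (C\<^sup>2 - 4) * a1 / D" unfolding e0_def e1_def using Dp
      by (simp add: field_simps power2_eq_square)
    then show ?thesis using CC Dp by simp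
  qed
  have e0b: "e0 \<ge> 2 * S / D" and e1b: "e1 \<ge> 2 * S / D"
  proof -
    have "C * a1 \<ge> 2 * a1" "C * a0 \<ge> 2 * a0" using C2 a0p a1p by (auto intro: mult_right_mono)
    then show "e0 \<ge> 2 * S / D" "e1 \<ge> 2 * S / D" unfolding e0_def e1_def S_def using Dp
      by (auto intro: divide_right_mono)
  qed
  have SD: "2 * S / D \<ge> 2 * (M + 4)" unfolding D_def using ST by simp
  define kR where "kR = kap (1,0)"
  define G where "G = (a0 * e0 + a1 * e1) / 2"
  have Gb: "G \<ge> S\<^sup>2 / D"
  proof -
    have "a0 * e0 + a1 * e1 = (2 * a0\<^sup>2 + 2 * C * a0 * a1 + 2 * a1\<^sup>2) / D"
      unfolding e0_def e1_def using Dp by (simp add: field_simps power2_eq_square)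
    moreover have "2 * C * a0 * a1 \<ge> 4 * a0 * a1"
    proof -
      have "C * (a0 * a1) \<ge> 2 * (a0 * a1)" using C2 a0p a1p by (intro mult_right_mono) auto
      then show ?thesis by (simp add: algebra_simps)
    qed
    ultimately have "a0 * e0 + a1 * e1 \<ge> (2 * a0\<^sup>2 + 4 * a0 * a1 + 2 * a1\<^sup>2) / D"
      using Dp by (simp add: divide_right_mono)
    moreover have "(2 * a0\<^sup>2 + 4 * a0 * a1 + 2 * a1\<^sup>2) / D = 2 * (S\<^sup>2 / D)"
      unfolding S_def by (simp add: power2_eq_square algebra_simps add_divide_distrib)
    ultimately have "a0 * e0 + a1 * e1 \<ge> 2 * (S\<^sup>2 / D)" by linarith
    then have "(a0 * e0 + a1 * e1) / 2 \<ge> (2 * (S\<^sup>2 / D)) / 2" by (intro divide_right_mono) auto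
    then show ?thesis unfolding G_def by simp
  qed
  have S2D: "S\<^sup>2 / D = S\<^sup>2 * T" unfolding D_def by simp
  define Q where "Q = G + C\<^sup>2 - kR * C - s"
  have Qp: "Q > 0"
  proof -
    have "\<bar>kR * C\<bar> \<le> M * 3" unfolding kR_def abs_mult using kbd C2 C3 M0
      by (intro mult_mono) auto
    then show ?thesis unfolding Q_def using Gb S2D S2T CC Dp by (simp add: abs_le_iff) linarith
  qed
  define A where "A = sqrt (4 * Q / D)"
  have Ap: "A > 0" unfolding A_def using Qp Dp by simp
  have AA: "A\<^sup>2 = 4 * Q / D" unfolding A_def using Qp Dp by simp
  define \<theta> where "\<theta> = arcosh (C / 2)"
  have cth: "cosh \<theta> = C / 2" unfolding \<theta>_def using C2 by simp
  have thp: "\<theta> > 0" unfolding \<theta>_def using C2 by simp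
  define E where "E n = (if even n then e0 else e1)" for n :: int
  define ch where "ch n = A * cosh (of_int n * \<theta>) + E n" for n
  define \<alpha> where "\<alpha> = A * \<theta> / 2"
  define \<beta> where "\<beta> = A / 2"
  have F: "fm kap C ch s M \<alpha> \<beta>"
  proof
    show "kap Z = kap W" if "edge_rel X Y Z W" for X Y Z W
      using col_edge[OF coloring that] unfolding kap_def by simp
    show "\<bar>kap X\<bar> \<le> M" for X by (rule kbd)
    show "2 < C" "C \<le> 3" using C2 C3 by auto
    show "ch (n + 1) + ch (n - 1) = C * ch n + kap (n + 1, 1)" for n
    proof -
      have h: "cosh (of_int (n+1) * \<theta>) + cosh (of_int (n-1) * \<theta>) = C * cosh (of_int n * \<theta>)"
        using cosh_rec[of "of_int n * \<theta>" \<theta>] cth by (simp add: algebra_simps)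
      have i: "E (n+1) + E (n-1) = C * E n + kap (n+1, 1)"
        unfolding E_def kchain using r0 r1 by auto
      have h2: "A * cosh (of_int (n+1) * \<theta>) + A * cosh (of_int (n-1) * \<theta>) = C * (A * cosh (of_int n * \<theta>))"
        using arg_cong[OF h, of "\<lambda>t. A * t"] by (simp add: algebra_simps)
      show ?thesis unfolding ch_def distrib_left using h2 i by linarith
    qed
    show "(ch 0)\<^sup>2 + (ch 1)\<^sup>2 + C\<^sup>2 - ch 0 * ch 1 * C
        = kap (0, 1) * ch 0 + kap (1, 1) * ch 1 + kap (1, 0) * C + s"
    proof -
      have c0: "ch 0 = A + e0" unfolding ch_def E_def by simp
      have c1: "ch 1 = A * C / 2 + e1" unfolding ch_def E_def using cth by simp
      have key: "A\<^sup>2 * (C\<^sup>2 - 4) = 2 * (a0 * e0 + a1 * e1) + 4 * (C\<^sup>2 - kR * C - s)"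
        using AA CC Dp unfolding Q_def G_def by (simp add: field_simps)
      show ?thesis unfolding c0 c1 ka0 ka1 kR_def[symmetric]
        using base_identity[OF r0 r1 key] by simp
    qed
    show "M + 4 \<le> ch n" for n
    proof -
      have "A * cosh (of_int n * \<theta>) \<ge> 0" using Ap by simp
      moreover have "E n \<ge> M + 4" unfolding E_def using e0b e1b SD M0 by auto
      ultimately show ?thesis unfolding ch_def by linarith
    qed
    show "\<alpha> * \<bar>of_int n\<bar> + \<beta> \<le> ch n" for n
    proof -
      have "cosh (of_int n * \<theta>) \<ge> (1 + \<bar>of_int n\<bar> * \<theta>) / 2"
        using cosh_lower[of "of_int n * \<theta>"] thp by (simp add: abs_mult)
      then have "A * cosh (of_int n * \<theta>) \<ge> A * ((1 + \<bar>of_int n\<bar> * \<theta>) / 2)"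
        using Ap by (intro mult_left_mono) auto
      moreover have "E n \<ge> 0" unfolding E_def using e0b e1b SD M0 by auto
      ultimately show ?thesis unfolding ch_def \<alpha>_def \<beta>_def by (simp add: algebra_simps)
    qed
    show "\<alpha> > 0" "\<beta> > 0" unfolding \<alpha>_def \<beta>_def using Ap thp by auto
  qed
  have "\<exists>\<phi>. markoff_map (of_real (k 1), of_real (k 2), of_real (k 3), of_real s) col ecol \<phi> \<and>
     (\<forall>X\<in>Omega. \<phi> X \<in> \<real>) \<and> BQ \<phi> L"
    by (rule to_markoff[OF coloring F kap_def sgpm prod])
  then show ?thesis unfolding k_def kf_def by simp
qed



definition J :: "region \<Rightarrow> region" where
  "J X = (if fst X < 0 then (- snd X, - fst X) else (snd X, fst X))"

lemma J_Omega: "X \<in> Omega \<Longrightarrow> J X \<in> Omega \<and> J (J X) = X"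
proof -
  assume X: "X \<in> Omega"
  obtain p q where Xe: "X = (p,q)" by (cases X)
  have cp: "coprime p q" using X Xe unfolding Omega_def by auto
  have p0: "p = 0 \<Longrightarrow> q = 1" using cp X Xe unfolding Omega_def by auto
  have cases: "(p = 1 \<and> q = 0) \<or> (q > 0 \<and> p > 0) \<or> (q > 0 \<and> p < 0) \<or> (p = 0 \<and> q = 1)"
    using X Xe cp p0 unfolding Omega_def by fastforce
  then show ?thesis using cp Xe unfolding J_def Omega_def
    by (auto simp: coprime_commute)
qed

lemma dt_J: "\<bar>dt (J X) (J Y)\<bar> = \<bar>dt X Y\<bar>"
  unfolding J_def dt_def by (auto simp: algebra_simps abs_minus_commute)

lemma adj_J: "adj X Y \<Longrightarrow> adj (J X) (J Y)"
  using J_Omega dt_J unfolding adj_dt by metis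

lemma vertex_J: "is_vertex {X,Y,Z} \<Longrightarrow> is_vertex {J X, J Y, J Z}"
  using vertex_adj adj_J vertex_intro by metis

lemma edge_rel_J: "edge_rel X Y Z W \<Longrightarrow> edge_rel (J X) (J Y) (J Z) (J W)"
proof -
  assume e: "edge_rel X Y Z W"
  then have ZO: "Z \<in> Omega" "W \<in> Omega" unfolding edge_rel_def using vertex_adj adj_Omega by blast+
  have "J Z \<noteq> J W" using e ZO J_Omega unfolding edge_rel_def by metis
  then show ?thesis using e vertex_J unfolding edge_rel_def by auto
qed

lemma coloring_J:
  assumes "valid_coloring col ecol"
  shows "valid_coloring (\<lambda>X. col (J X)) (\<lambda>e. ecol (J ` e))"
proof -
  have f1: "\<forall>X\<in>Omega. col (J X) \<in> {1,2,3}" using J_Omega col_range[OF assms] by blast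
  have f2: "\<forall>e\<in>Edges. ecol (J ` e) \<in> {1,2,3}"
  proof
    fix e assume "e \<in> Edges"
    then obtain X Y where e: "e = {X,Y}" "adj X Y" unfolding Edges_def by blast
    have "J ` e = {J X, J Y}" using e by auto
    then have "J ` e \<in> Edges" unfolding Edges_def using adj_J[OF e(2)] by blast
    then show "ecol (J ` e) \<in> {1,2,3}" using assms unfolding valid_coloring_def by blast
  qed
  have f3: "\<forall>X Y Z W. edge_rel X Y Z W \<longrightarrow> ecol (J ` {X, Y}) = col (J Z) \<and> col (J Z) = col (J W) \<and>
       ecol (J ` {X, Y}) \<noteq> col (J X) \<and> ecol (J ` {X, Y}) \<noteq> col (J Y) \<and> col (J X) \<noteq> col (J Y)"
  proof (intro allI impI)
    fix X Y Z W assume "edge_rel X Y Z W"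
    then have e: "edge_rel (J X) (J Y) (J Z) (J W)" by (rule edge_rel_J)
    have c: "col (J Z) = col (J W) \<and> ecol {J X, J Y} = col (J Z) \<and> col (J X) \<noteq> col (J Y) \<and>
      col (J Z) \<noteq> col (J X) \<and> col (J Z) \<noteq> col (J Y)" using col_edge[OF assms e] .
    have im: "J ` {X,Y} = {J X, J Y}" by auto
    show "ecol (J ` {X, Y}) = col (J Z) \<and> col (J Z) = col (J W) \<and>
       ecol (J ` {X, Y}) \<noteq> col (J X) \<and> ecol (J ` {X, Y}) \<noteq> col (J Y) \<and> col (J X) \<noteq> col (J Y)"
      unfolding im using c by metis
  qed
  show ?thesis unfolding valid_coloring_def using f1 f2 f3 by blast
qed

lemma transfer:
  assumes "markoff_map mu (\<lambda>X. col (J X)) (\<lambda>e. ecol (J ` e)) \<psi>"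
    and "\<forall>X\<in>Omega. \<psi> X \<in> \<real>" and "BQ \<psi> L"
  shows "markoff_map mu col ecol (\<lambda>X. \<psi> (J X)) \<and> (\<forall>X\<in>Omega. \<psi> (J X) \<in> \<real>) \<and> BQ (\<lambda>X. \<psi> (J X)) L"
proof -
  obtain p q r s where mu: "mu = (p,q,r,s)" by (cases mu) auto
  have JJ: "J (J X) = X" if "X \<in> Omega" for X using J_Omega that by blast
  have vO: "X \<in> Omega" "Y \<in> Omega" "Z \<in> Omega" if "is_vertex {X,Y,Z}" for X Y Z
    using vertex_adj[OF that] adj_Omega by blast+
  have eO: "X \<in> Omega" "Y \<in> Omega" "Z \<in> Omega" "W \<in> Omega" if "edge_rel X Y Z W" for X Y Z W
    using that unfolding edge_rel_def using vO by blast+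
  have im: "J ` {Y,Z} = {J Y, J Z}" for Y Z by auto
  obtain A1 A2 A3 A4 where
    A1: "\<forall>X Y Z. is_vertex {X, Y, Z} \<and> col (J X) = 1 \<and> col (J Y) = 2 \<and> col (J Z) = 3 \<longrightarrow>
          (\<psi> X)\<^sup>2 + (\<psi> Y)\<^sup>2 + (\<psi> Z)\<^sup>2 + \<psi> X * \<psi> Y * \<psi> Z = p * \<psi> X + q * \<psi> Y + r * \<psi> Z + s"
    and A2: "\<forall>Y Z X X'. edge_rel Y Z X X' \<and> ecol (J ` {Y, Z}) = 1 \<longrightarrow> \<psi> X + \<psi> X' = p - \<psi> Y * \<psi> Z"
    and A3: "\<forall>X Z Y Y'. edge_rel X Z Y Y' \<and> ecol (J ` {X, Z}) = 2 \<longrightarrow> \<psi> Y + \<psi> Y' = q - \<psi> X * \<psi> Z"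
    and A4: "\<forall>X Y Z Z'. edge_rel X Y Z Z' \<and> ecol (J ` {X, Y}) = 3 \<longrightarrow> \<psi> Z + \<psi> Z' = r - \<psi> X * \<psi> Y"
    using assms(1) unfolding markoff_map_def mu prod.case by blast
  have m: "markoff_map mu col ecol (\<lambda>X. \<psi> (J X))"
    unfolding markoff_map_def mu prod.case
  proof (intro conjI allI impI)
    fix X Y Z assume h: "is_vertex {X, Y, Z} \<and> col X = 1 \<and> col Y = 2 \<and> col Z = 3"
    have "is_vertex {J X, J Y, J Z} \<and> col (J (J X)) = 1 \<and> col (J (J Y)) = 2 \<and> col (J (J Z)) = 3"
      using h vertex_J JJ vO by metis
    then show "(\<psi> (J X))\<^sup>2 + (\<psi> (J Y))\<^sup>2 + (\<psi> (J Z))\<^sup>2 + \<psi> (J X) * \<psi> (J Y) * \<psi> (J Z) =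
       p * \<psi> (J X) + q * \<psi> (J Y) + r * \<psi> (J Z) + s" using A1 by blast
  next
    fix Y Z X X' assume h: "edge_rel Y Z X X' \<and> ecol {Y, Z} = 1"
    have "edge_rel (J Y) (J Z) (J X) (J X') \<and> ecol (J ` {J Y, J Z}) = 1"
      using h edge_rel_J eO im JJ by metis
    then show "\<psi> (J X) + \<psi> (J X') = p - \<psi> (J Y) * \<psi> (J Z)" using A2 by blast
  next
    fix X Z Y Y' assume h: "edge_rel X Z Y Y' \<and> ecol {X, Z} = 2"
    have "edge_rel (J X) (J Z) (J Y) (J Y') \<and> ecol (J ` {J X, J Z}) = 2"
      using h edge_rel_J eO im JJ by metis
    then show "\<psi> (J Y) + \<psi> (J Y') = q - \<psi> (J X) * \<psi> (J Z)" using A3 by blast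
  next
    fix X Y Z Z' assume h: "edge_rel X Y Z Z' \<and> ecol {X, Y} = 3"
    have "edge_rel (J X) (J Y) (J Z) (J Z') \<and> ecol (J ` {J X, J Y}) = 3"
      using h edge_rel_J eO im JJ by metis
    then show "\<psi> (J Z) + \<psi> (J Z') = r - \<psi> (J X) * \<psi> (J Y)" using A4 by blast
  qed
  have "{X \<in> Omega. norm (\<psi> (J X)) \<le> L} \<subseteq> J ` {Y \<in> Omega. norm (\<psi> Y) \<le> L}"
  proof
    fix X assume X: "X \<in> {X \<in> Omega. norm (\<psi> (J X)) \<le> L}"
    then have "J X \<in> {Y \<in> Omega. norm (\<psi> Y) \<le> L}" using J_Omega by auto
    moreover have "X = J (J X)" using JJ X by simp
    ultimately show "X \<in> J ` {Y \<in> Omega. norm (\<psi> Y) \<le> L}" by blast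
  qed
  moreover have "finite {Y \<in> Omega. norm (\<psi> Y) \<le> L}" using assms(3) unfolding BQ_def by simp
  ultimately have fin: "finite {X \<in> Omega. norm (\<psi> (J X)) \<le> L}" using finite_subset by blast
  have "\<forall>X\<in>Omega. \<psi> (J X) \<notin> complex_of_real ` {-2..2}" using assms(3) J_Omega unfolding BQ_def by blast
  then have "BQ (\<lambda>X. \<psi> (J X)) L" using fin unfolding BQ_def by simp
  moreover have "\<forall>X\<in>Omega. \<psi> (J X) \<in> \<real>" using assms(2) J_Omega by blast
  ultimately show ?thesis using m by blast
qed

lemma GT_real: "GT (complex_of_real a) (complex_of_real b) (complex_of_real c) (complex_of_real d)
  = (of_real (a*b + c*d), of_real (a*d + b*c), of_real (a*c + b*d), of_real (4 - a\<^sup>2 - b\<^sup>2 - c\<^sup>2 - d\<^sup>2 - a*b*c*d))"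
  unfolding GT_def by simp

theorem theorem5p3:
  fixes a b c d m :: real
    and col :: "region \<Rightarrow> nat" and ecol :: "region set \<Rightarrow> nat"
  assumes coloring: "valid_coloring col ecol"
    and nonzero: "(case GT a b c d of (p, q, r, s) \<Rightarrow> (p, q, r) \<noteq> (0, 0, 0))"
    and m: "sink_constant (GT a b c d) col ecol m"
  shows "\<exists>\<phi>. markoff_map (GT a b c d) col ecol \<phi> \<and> (\<forall>X\<in>Omega. \<phi> X \<in> \<real>) \<and>
             BQ \<phi> (L_const a b c d m)"
proof -
  define P where "P = a*b + c*d"
  define Q where "Q = a*d + b*c"
  define R where "R = a*c + b*d"
  define S where "S = 4 - a\<^sup>2 - b\<^sup>2 - c\<^sup>2 - d\<^sup>2 - a*b*c*d"
  define L where "L = L_const a b c d m"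
  have G: "GT a b c d = (of_real P, of_real Q, of_real R, of_real S)"
    unfolding P_def Q_def R_def S_def by (rule GT_real)
  have nz: "P \<noteq> 0 \<or> Q \<noteq> 0 \<or> R \<noteq> 0" using nonzero unfolding G by auto
  show ?thesis
  proof (cases "kf P Q R (col (0,1)) \<noteq> 0 \<or> kf P Q R (col (1,1)) \<noteq> 0")
    case True
    show ?thesis using construct[OF coloring True, of S L] unfolding G L_def by simp
  next
    case False
    have a01: "adj (1,0) (0,1)" "adj (0,1) (1,1)" "adj (1,0) (1,1)"
      unfolding adj_def Omega_def by auto
    have cr: "col (0,1) \<in> {1,2,3}" "col (1,1) \<in> {1,2,3}" "col (1,0) \<in> {1,2,3}"
      using col_range[OF coloring] a01 adj_Omega by blast+
    have cd: "col (0,1) \<noteq> col (1,0)" "col (1,1) \<noteq> col (0,1)" "col (1,1) \<noteq> col (1,0)"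
      using vertex_cols[OF coloring a01] by auto
    have kR: "kf P Q R (col (1,0)) \<noteq> 0"
      using False nz cr cd unfolding kf_def by (auto split: if_splits)
    have cJ: "valid_coloring (\<lambda>X. col (J X)) (\<lambda>e. ecol (J ` e))" by (rule coloring_J[OF coloring])
    have j01: "J (0,1) = (1,0)" unfolding J_def by simp
    have nz2: "kf P Q R ((\<lambda>X. col (J X)) (0,1)) \<noteq> 0 \<or> kf P Q R ((\<lambda>X. col (J X)) (1,1)) \<noteq> 0"
      using kR j01 by simp
    obtain \<psi> where psi: "markoff_map (of_real P, of_real Q, of_real R, of_real S) (\<lambda>X. col (J X)) (\<lambda>e. ecol (J ` e)) \<psi>"
       "\<forall>X\<in>Omega. \<psi> X \<in> \<real>" "BQ \<psi> L"
      using construct[OF cJ nz2, of S L] by blast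
    show ?thesis using transfer[OF psi] unfolding G L_def by blast
  qed
qed

end
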